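(* Let $G=(V,E,\mathbf{X})$ be a finite graph with node features $\mathbf{X}[v]\in\mathbb{R}^t$ for $v\in V$, and let $G_1=(V_1,E_1,\mathbf{X}_1),\dots,G_q=(V_q,E_q,\mathbf{X}_q)$ be the subgraphs produced from $G$ by a subgraph generation policy, where $V_j\subseteq V$ and $\mathbf{X}_j[v]\in\mathbb{R}^t$. Fix $L\ge 1$ message-passing layers $\mathtt{MPNN}_1,\dots,\mathtt{MPNN}_L$ (with aggregate functions $AGG_i$ and combine functions $COM_i$) and a pooling function $\mathtt{pool}$. Conventional subgraph GNN: for each $j$, set $\mathbf{H}_j^{(0)}=\mathbf{X}_j$ and for $1\le i\le L$, $v\in V_j$, $\mathbf{H}_j^{(i)}[v]=COM_i\big(AGG_i(\{\!\{\mathbf{H}_j^{(i-1)}[u]:u\in\mathcal{N}_j(v)\}\!\}),\mathbf{H}_j^{(i-1)}[v]\big)$; the output is $Y=\mathtt{pool}(\mathbf{H}_1^{(L)},\dots,\mathbf{H}_q^{(L)})$. ENFA: set $\mathbf{H}_o^{(0)}=\mathbf{X}$ and $\widehat{\mathbf{H}}_j^{(0)}=\mathbf{X}_j$. For $1\le i\le L$: compute $\mathbf{H}_o^{(i)}$ by applying $\mathtt{MPNN}_i$ to $\mathbf{H}_o^{(i-1)}$ on the original graph $G$ (neighborhoods $\mathcal{N}(v)$); for each $j$, compute $\widehat{\mathbf{H}}_j^{(i)}$ by applying $\mathtt{MPNN}_i$ to $\widehat{\mathbf{H}}_j^{(i-1)}$ on the $(L+1)$-hop ego net $G_j^{L+1}$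 of $\mathtt{pvt}(G_j)$ in $G_j$ (nodes of $V_j$ not in this ego net have no neighbors); then for every $v\in V_j$ with $\mathtt{phop}_j(v)>i$ overwrite $\widehat{\mathbf{H}}_j^{(i)}[v]:=\mathbf{H}_o^{(i)}[v]$. The ENFA output is $\widehat{Y}=\mathtt{pool}(\widehat{\mathbf{H}}_1^{(L)},\dots,\widehat{\mathbf{H}}_q^{(L)})$. Then for every $j\in\{1,\dots,q\}$ and every node $v$ of the ego net $G_j^{L+1}$, $\widehat{\mathbf{H}}_j^{(L)}[v]=\mathbf{H}_j^{(L)}[v]$; consequently $\widehat{Y}=Y$.
   Context: $\mathcal{N}(v)$ denotes the neighbors of $v$ in $G$ and $\mathcal{N}_j(v)$ the neighbors of $v$ in $G_j$; $\{\!\{\cdot\}\!\}$ denotes a multiset. The pivot nodes of $G_j$ are $\mathtt{pvt}(G_j)=\{v\in V_j:\mathcal{N}(v)\ne\mathcal{N}_j(v)\text{ or }\mathbf{X}[v]\ne\mathbf{X}_j[v]\}$, i.e. the nodes whose neighborhood or features differ between $G_j$ and $G$. The pivot hop of $v\in V_j$ is $\mathtt{phop}_j(v)=\min\{\mathtt{hop}^j(v,w):w\in\mathtt{pvt}(G_j)\}$, where $\mathtt{hop}^j$ is the shortest-path distance in $G_j$ (the minimum over an empty set is $+\infty$). The $h$-hop ego net $G_j^{h}$ of $\mathtt{pvt}(G_j)$ in $G_j$ is the subgraph of $G_j$ induced on the nodes $v\in V_j$ with $\mathtt{phop}_j(v)\le h$, with features inherited from $\mathbf{X}_j$. Examples of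 policies: node-marking (each subgraph is $G$ with an extra feature column marking one root node, the original graph being taken with that column equal to zero), node-deleting (delete one node and its incident edges), edge-deleting (delete one edge). The same layers $\mathtt{MPNN}_i$ (same parameters) are used on $G$ and on all subgraphs. *)

theory Defs
  imports Main "HOL-Library.Multiset" "HOL-Library.Extended_Nat" "HOL-Library.FuncSet"
begin

text \<open>Graphs are given by a node set and a neighbourhood function N :: 'v => 'v set.\<close>

definition adj :: "('v \<Rightarrow> 'v set) \<Rightarrow> 'v \<Rightarrow> 'v \<Rightarrow> bool" where
  "adj N a b \<longleftrightarrow> b \<in> N a"

text \<open>Shortest-path (hop) distance; infinity if unreachable.\<close>
definition hop :: "('v \<Rightarrow> 'v set) \<Rightarrow> 'v \<Rightarrow> 'v \<Rightarrow> enat" where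
  "hop N v w = (INF n \<in> {n. (adj N ^^ n) v w}. enat n)"

definition pvt :: "('v \<Rightarrow> 'v set) \<Rightarrow> ('v \<Rightarrow> 'f) \<Rightarrow> 'v set \<Rightarrow> ('v \<Rightarrow> 'v set) \<Rightarrow> ('v \<Rightarrow> 'f) \<Rightarrow> 'v set" where
  "pvt N X Vj Nj Xj = {v \<in> Vj. N v \<noteq> Nj v \<or> X v \<noteq> Xj v}"

text \<open>Pivot hop (min over empty set = infinity).\<close>
definition phop :: "('v \<Rightarrow> 'v set) \<Rightarrow> ('v \<Rightarrow> 'f) \<Rightarrow> 'v set \<Rightarrow> ('v \<Rightarrow> 'v set) \<Rightarrow> ('v \<Rightarrow> 'f) \<Rightarrow> 'v \<Rightarrow> enat" where
  "phop N X Vj Nj Xj v = (INF w \<in> pvt N X Vj Nj Xj. hop Nj v w)"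

definition ego :: "('v \<Rightarrow> 'v set) \<Rightarrow> ('v \<Rightarrow> 'f) \<Rightarrow> 'v set \<Rightarrow> ('v \<Rightarrow> 'v set) \<Rightarrow> ('v \<Rightarrow> 'f) \<Rightarrow> nat \<Rightarrow> 'v set" where
  "ego N X Vj Nj Xj h = {v \<in> Vj. phop N X Vj Nj Xj v \<le> enat h}"

definition egoN :: "('v \<Rightarrow> 'v set) \<Rightarrow> ('v \<Rightarrow> 'f) \<Rightarrow> 'v set \<Rightarrow> ('v \<Rightarrow> 'v set) \<Rightarrow> ('v \<Rightarrow> 'f) \<Rightarrow> nat \<Rightarrow> 'v \<Rightarrow> 'v set" where
  "egoN N X Vj Nj Xj h v =
     (if v \<in> ego N X Vj Nj Xj h then Nj v \<inter> ego N X Vj Nj Xj h else {})"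

text \<open>Stacked message passing: layer i (1 <= i) uses agg i and com i.
  mpnn agg com N X i is the representation H^(i).\<close>
fun mpnn :: "(nat \<Rightarrow> 'f multiset \<Rightarrow> 'a) \<Rightarrow> (nat \<Rightarrow> 'a \<Rightarrow> 'f \<Rightarrow> 'f) \<Rightarrow> ('v \<Rightarrow> 'v set)
             \<Rightarrow> ('v \<Rightarrow> 'f) \<Rightarrow> nat \<Rightarrow> 'v \<Rightarrow> 'f" where
  "mpnn agg com N X 0 = X"
| "mpnn agg com N X (Suc i) =
     (\<lambda>v. com (Suc i) (agg (Suc i) (image_mset (mpnn agg com N X i) (mset_set (N v))))
                     (mpnn agg com N X i v))"

fun enfa :: "(nat \<Rightarrow> 'f multiset \<Rightarrow> 'a) \<Rightarrow> (nat \<Rightarrow> 'a \<Rightarrow> 'f \<Rightarrow> 'f) \<Rightarrow> nat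
             \<Rightarrow> ('v \<Rightarrow> 'v set) \<Rightarrow> ('v \<Rightarrow> 'f) \<Rightarrow> 'v set \<Rightarrow> ('v \<Rightarrow> 'v set) \<Rightarrow> ('v \<Rightarrow> 'f)
             \<Rightarrow> nat \<Rightarrow> 'v \<Rightarrow> 'f" where
  "enfa agg com L N X Vj Nj Xj 0 = Xj"
| "enfa agg com L N X Vj Nj Xj (Suc i) =
     (\<lambda>v. if v \<in> Vj \<and> phop N X Vj Nj Xj v > enat (Suc i)
          then mpnn agg com N X (Suc i) v
          else com (Suc i)
                 (agg (Suc i) (image_mset (enfa agg com L N X Vj Nj Xj i)
                                (mset_set (egoN N X Vj Nj Xj (L + 1) v))))
                 (enfa agg com L N X Vj Nj Xj i v))"

end

theory Submission
  imports Defs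
begin


lemma INF_enat_le:
  fixes f :: "'b \<Rightarrow> enat"
  shows "(INF x\<in>A. f x) \<le> enat k \<longleftrightarrow> (\<exists>x\<in>A. f x \<le> enat k)"
proof
  assume "(INF x\<in>A. f x) \<le> enat k"
  then have "\<exists>x\<in>A. enat (Suc k) > f x" unfolding INF_le_iff by auto
  then show "\<exists>x\<in>A. f x \<le> enat k"
    by (metis Suc_ile_eq order_le_less linorder_not_less)
next
  assume "\<exists>x\<in>A. f x \<le> enat k"
  then show "(INF x\<in>A. f x) \<le> enat k" by (meson INF_lower2)
qed

definition PP :: "('v \<Rightarrow> 'v set) \<Rightarrow> ('v \<Rightarrow> 'f) \<Rightarrow> 'v set \<Rightarrow> ('v \<Rightarrow> 'v set) \<Rightarrow> ('v \<Rightarrow> 'f) \<Rightarrow> 'v \<Rightarrow> nat \<Rightarrow> bool" where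
  "PP N X Vj Nj Xj v k = (\<exists>w\<in>pvt N X Vj Nj Xj. \<exists>n\<le>k. (adj Nj ^^ n) v w)"

lemma phop_le: "phop N X Vj Nj Xj v \<le> enat k \<longleftrightarrow> PP N X Vj Nj Xj v k"
  unfolding phop_def hop_def PP_def INF_enat_le by auto

lemma PP_step: "u \<in> Nj v \<Longrightarrow> PP N X Vj Nj Xj u k \<Longrightarrow> PP N X Vj Nj Xj v (Suc k)"
  unfolding PP_def
  by (meson Suc_le_mono adj_def relpowp_Suc_I2)

lemma PP_mono: "PP N X Vj Nj Xj v k \<Longrightarrow> k \<le> m \<Longrightarrow> PP N X Vj Nj Xj v m"
  unfolding PP_def by (meson order_trans)


lemma notPP_pvt: "\<not> PP N X Vj Nj Xj v k \<Longrightarrow> v \<notin> pvt N X Vj Nj Xj"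
  unfolding PP_def by (metis le0 relpowp_0_I)

lemma mset_cong: "(\<And>x. x \<in> A \<Longrightarrow> f x = g x) \<Longrightarrow> image_mset f (mset_set A) = image_mset g (mset_set A)"
  by (cases "finite A") (auto intro: image_mset_cong)

lemma lemA:
  assumes sub: "\<forall>v\<in>Vj. Nj v \<subseteq> Vj"
  shows "v \<in> Vj \<Longrightarrow> \<not> PP N X Vj Nj Xj v i \<Longrightarrow> mpnn agg com N X i v = mpnn agg com Nj Xj i v"
proof (induction i arbitrary: v)
  case 0
  then show ?case using notPP_pvt[OF 0(2)] by (auto simp: pvt_def)
next
  case (Suc i)
  have np: "v \<notin> pvt N X Vj Nj Xj" using notPP_pvt[OF Suc(3)] .
  then have NN: "N v = Nj v" using Suc(2) by (auto simp: pvt_def)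
  have nb: "\<And>u. u \<in> Nj v \<Longrightarrow> mpnn agg com N X i u = mpnn agg com Nj Xj i u"
  proof -
    fix u assume u: "u \<in> Nj v"
    then have "u \<in> Vj" using sub Suc.prems(1) by blast
    moreover have "\<not> PP N X Vj Nj Xj u i" using PP_step[of u Nj v N X Vj Xj i, OF u] Suc.prems(2) by blast
    ultimately show "mpnn agg com N X i u = mpnn agg com Nj Xj i u" using Suc.IH by blast
  qed
  have "\<not> PP N X Vj Nj Xj v i" using Suc.prems(2) PP_mono[of N X Vj Nj Xj v i "Suc i"] by auto
  then have self: "mpnn agg com N X i v = mpnn agg com Nj Xj i v"
    using Suc.IH Suc.prems(1) by blast
  have I: "image_mset (mpnn agg com N X i) (mset_set (N v)) = image_mset (mpnn agg com Nj Xj i) (mset_set (Nj v))"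
    unfolding NN by (rule mset_cong) (rule nb)
  show ?case by (simp only: mpnn.simps(2) I self)
qed

lemma mainlem:
  assumes sub: "\<forall>v\<in>Vj. Nj v \<subseteq> Vj"
    and sym: "\<forall>u\<in>Vj. \<forall>v\<in>Vj. u \<in> Nj v \<longleftrightarrow> v \<in> Nj u"
  shows "i \<le> L \<Longrightarrow> v \<in> Vj \<Longrightarrow> enfa agg com L N X Vj Nj Xj i v = mpnn agg com Nj Xj i v"
proof (induction i arbitrary: v)
  case 0
  then show ?case by simp
next
  case (Suc i)
  show ?case
  proof (cases "phop N X Vj Nj Xj v > enat (Suc i)")
    case True
    then have "\<not> PP N X Vj Nj Xj v (Suc i)" using phop_le by (metis linorder_not_less)
    then show ?thesis using True Suc.prems lemA[OF sub, where v=v and i="Suc i" and N=N and X=X and agg=agg and com=com and Xj=Xj] by (simp del: mpnn.simps)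
  next
    case False
    then have P: "PP N X Vj Nj Xj v (Suc i)" using phop_le by (metis linorder_not_less)
    have egov: "v \<in> ego N X Vj Nj Xj (L + 1)"
    proof -
      have "PP N X Vj Nj Xj v (L+1)" by (rule PP_mono[OF P]) (use Suc.prems in simp)
      then show ?thesis using Suc.prems(2) by (simp add: ego_def phop_le)
    qed
    have "egoN N X Vj Nj Xj (L + 1) v = Nj v"
    proof -
      have "\<And>u. u \<in> Nj v \<Longrightarrow> u \<in> ego N X Vj Nj Xj (L + 1)"
      proof -
        fix u assume u: "u \<in> Nj v"
        then have uV: "u \<in> Vj" using sub Suc.prems by blast
        then have "v \<in> Nj u" using sym Suc.prems u by blast
        then have "PP N X Vj Nj Xj u (Suc (Suc i))" by (rule PP_step[OF _ P])
        then have "PP N X Vj Nj Xj u (L+1)" by (rule PP_mono) (use Suc.prems in simp)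
        then show "u \<in> ego N X Vj Nj Xj (L + 1)" using uV by (simp add: ego_def phop_le)
      qed
      then show ?thesis using egov by (auto simp: egoN_def)
    qed
    moreover have "\<And>u. u \<in> Nj v \<Longrightarrow> enfa agg com L N X Vj Nj Xj i u = mpnn agg com Nj Xj i u"
    proof -
      fix u assume "u \<in> Nj v"
      then have "u \<in> Vj" using sub Suc.prems(2) by blast
      then show "enfa agg com L N X Vj Nj Xj i u = mpnn agg com Nj Xj i u"
        using Suc.IH Suc.prems(1) by simp
    qed
    ultimately have "image_mset (enfa agg com L N X Vj Nj Xj i) (mset_set (egoN N X Vj Nj Xj (L + 1) v))
        = image_mset (mpnn agg com Nj Xj i) (mset_set (Nj v))"
      using mset_cong by metis
    moreover have "enfa agg com L N X Vj Nj Xj i v = mpnn agg com Nj Xj i v"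
      using Suc.IH Suc.prems by simp
    moreover have "enfa agg com L N X Vj Nj Xj (Suc i) v = com (Suc i)
                 (agg (Suc i) (image_mset (enfa agg com L N X Vj Nj Xj i)
                                (mset_set (egoN N X Vj Nj Xj (L + 1) v))))
                 (enfa agg com L N X Vj Nj Xj i v)" using False by simp
    ultimately show ?thesis by simp
  qed
qed

theorem theorem1:
  fixes V :: "'v set" and N :: "'v \<Rightarrow> 'v set" and X :: "'v \<Rightarrow> 'f"
    and q :: nat and Vs :: "nat \<Rightarrow> 'v set" and Ns :: "nat \<Rightarrow> 'v \<Rightarrow> 'v set"
    and Xs :: "nat \<Rightarrow> 'v \<Rightarrow> 'f"
    and L :: nat
    and agg :: "nat \<Rightarrow> 'f multiset \<Rightarrow> 'a" and com :: "nat \<Rightarrow> 'a \<Rightarrow> 'f \<Rightarrow> 'f"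
    and pool :: "('v \<Rightarrow> 'f) list \<Rightarrow> 'o"
  assumes finV: "finite V"
    and N_sub: "\<forall>v\<in>V. N v \<subseteq> V"
    and N_sym: "\<forall>u\<in>V. \<forall>v\<in>V. u \<in> N v \<longleftrightarrow> v \<in> N u"
    and Vs_sub: "\<forall>j\<in>{1..q}. Vs j \<subseteq> V"
    and Ns_sub: "\<forall>j\<in>{1..q}. \<forall>v\<in>Vs j. Ns j v \<subseteq> Vs j"
    and Ns_sym: "\<forall>j\<in>{1..q}. \<forall>u\<in>Vs j. \<forall>v\<in>Vs j. u \<in> Ns j v \<longleftrightarrow> v \<in> Ns j u"
    and L_pos: "L \<ge> 1"
  shows "(\<forall>j\<in>{1..q}. \<forall>v\<in>ego N X (Vs j) (Ns j) (Xs j) (L + 1).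
            enfa agg com L N X (Vs j) (Ns j) (Xs j) L v = mpnn agg com (Ns j) (Xs j) L v)
       \<and> pool (map (\<lambda>j. restrict (enfa agg com L N X (Vs j) (Ns j) (Xs j) L) (Vs j)) [1..<q+1])
         = pool (map (\<lambda>j. restrict (mpnn agg com (Ns j) (Xs j) L) (Vs j)) [1..<q+1])"
proof -
  have key: "\<And>j v. j \<in> {1..q} \<Longrightarrow> v \<in> Vs j \<Longrightarrow>
      enfa agg com L N X (Vs j) (Ns j) (Xs j) L v = mpnn agg com (Ns j) (Xs j) L v"
    proof -
    fix j v assume "j \<in> {1..q}" "v \<in> Vs j"
    then show "enfa agg com L N X (Vs j) (Ns j) (Xs j) L v = mpnn agg com (Ns j) (Xs j) L v"
      using mainlem[of "Vs j" "Ns j" L L v] Ns_sub Ns_sym by simp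
  qed
  have A: "\<forall>j\<in>{1..q}. \<forall>v\<in>ego N X (Vs j) (Ns j) (Xs j) (L + 1).
            enfa agg com L N X (Vs j) (Ns j) (Xs j) L v = mpnn agg com (Ns j) (Xs j) L v"
    using key by (auto simp: ego_def)
  have "map (\<lambda>j. restrict (enfa agg com L N X (Vs j) (Ns j) (Xs j) L) (Vs j)) [1..<q+1]
      = map (\<lambda>j. restrict (mpnn agg com (Ns j) (Xs j) L) (Vs j)) [1..<q+1]"
  proof (rule map_cong[OF refl])
    fix j assume "j \<in> set [1..<q+1]"
    then have j: "j \<in> {1..q}" by auto
    show "restrict (enfa agg com L N X (Vs j) (Ns j) (Xs j) L) (Vs j) = restrict (mpnn agg com (Ns j) (Xs j) L) (Vs j)"
      by (rule restrict_ext) (rule key[OF j])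
  qed
  then show ?thesis by (intro conjI A) (simp only:)
qed

end
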